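(* Let $\epsilon$ be an inversion sequence and let $\epsilon'$ be the result of applying Algorithm A (described below) to $\epsilon$. If position $i$ is a transient occurrence of $p$ when Algorithm A is applied to $\epsilon$, then position $i$ is also a transient occurrence of $p$ when Algorithm A is applied to $\epsilon'$.
   Context: An inversion sequence of length $n$ is an integer sequence with $0\le\epsilon_i<i$ for all $i$. The reduction of an integer word replaces each occurrence of its $k$-th smallest distinct value by $k-1$; a consecutive pattern $\underline{p_1p_2p_3p_4}$ occurs in a sequence at position $i$ if the reduction of its entries in positions $i,\dots,i+3$ equals $p_1p_2p_3p_4$. Let $p=\underline{0102}$ and $q=\underline{0112}$. Algorithm A, on input an integer sequence $\mathrm{seq}=\epsilon_1\cdots\epsilon_n$: let $E_p$, $E_q$ be the sets of positions of occurrences of $p$, resp. $q$, in the input sequence; set $\mathrm{last}:=$ null. For $i=1,2,\dots,n$ in order: let $N_p,N_q$ be the sets of positions of occurrences of $p$, resp. $q$, in the current sequence. If $i-2\in E_p$: set $\mathrm{last}:=\mathrm{seq}[i]$ and $\mathrm{seq}[i]:=\mathrm{seq}[i-1]$. Else if $i-2\in E_q$: set $\mathrm{last}:=\mathrm{seq}[i]$ and $\mathrm{seq}[i]:=\mathrm{seq}[i-2]$. Else if $i-2\in N_p$ or $i-2\in N_q$: swap the values of $\mathrm{seq}[i]$ and $\mathrm{last}$. Output $\mathrm{seq}$. For an input $\alpha$ with output $\alpha'$: position $i$ is an original occurrence of $p$ (for this run) if $\alpha_i=\alpha_{i+2}$ and $\alpha_i<\alpha_{i+1}<\alpha_{i+3}$;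 it is a transient occurrence of $p$ (for this run) if it is not an original occurrence of $p$ but $\alpha'_i=\alpha_{i+2}$ and $\alpha'_i<\alpha_{i+1}<\alpha_{i+3}$. *)

theory Defs
  imports Main
begin

(* Sequences are lists of naturals; the paper's 1-based entry epsilon_i is nth1 s i. *)
definition nth1 :: "nat list \<Rightarrow> nat \<Rightarrow> nat" where
  "nth1 s i = s ! (i - 1)"

definition inversion_seq :: "nat list \<Rightarrow> bool" where
  "inversion_seq s \<longleftrightarrow> (\<forall>i. 1 \<le> i \<and> i \<le> length s \<longrightarrow> nth1 s i < i)"

definition reduction :: "nat list \<Rightarrow> nat list" where
  "reduction w = map (\<lambda>x. card {y \<in> set w. y < x}) w"

definition occ :: "nat list \<Rightarrow> nat list \<Rightarrow> nat \<Rightarrow> bool" where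
  "occ pat s i \<longleftrightarrow> 1 \<le> i \<and> i + 3 \<le> length s \<and>
     reduction [nth1 s i, nth1 s (i+1), nth1 s (i+2), nth1 s (i+3)] = pat"

definition pat_p :: "nat list" where "pat_p = [0,1,0,2]"
definition pat_q :: "nat list" where "pat_q = [0,1,1,2]"

(* one iteration of Algorithm A; E0 is the input sequence (for E_p, E_q);
   state = (current seq, last) with last = None for null.
   Convention: swapping with a null 'last' leaves everything unchanged. *)
definition algA_step :: "nat list \<Rightarrow> nat \<Rightarrow> nat list \<times> nat option \<Rightarrow> nat list \<times> nat option" where
  "algA_step E0 i st = (let s = fst st; lst = snd st in
     if occ pat_p E0 (i - 2) then (s[i - 1 := nth1 s (i - 1)], Some (nth1 s i))
     else if occ pat_q E0 (i - 2) then (s[i - 1 := nth1 s (i - 2)], Some (nth1 s i))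
     else if occ pat_p s (i - 2) \<or> occ pat_q s (i - 2) then
       (case lst of None \<Rightarrow> (s, lst) | Some v \<Rightarrow> (s[i - 1 := v], Some (nth1 s i)))
     else (s, lst))"

definition algA :: "nat list \<Rightarrow> nat list" where
  "algA s = fst (fold (algA_step s) [1..<length s + 1] (s, None))"

definition original_occ_p :: "nat list \<Rightarrow> nat \<Rightarrow> bool" where
  "original_occ_p a i \<longleftrightarrow> nth1 a i = nth1 a (i+2) \<and> nth1 a i < nth1 a (i+1) \<and> nth1 a (i+1) < nth1 a (i+3)"

definition transient_occ_p :: "nat list \<Rightarrow> nat \<Rightarrow> bool" where
  "transient_occ_p a i \<longleftrightarrow> 1 \<le> i \<and> i + 3 \<le> length a \<and> \<not> original_occ_p a i \<and>
     (let a' = algA a in nth1 a' i = nth1 a (i+2) \<and> nth1 a' i < nth1 a (i+1) \<and> nth1 a (i+1) < nth1 a (i+3))"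

end

theory Submission
(* Proof via an involution property of Algorithm A. *)
  imports Defs
begin

definition isP :: "nat \<Rightarrow> nat \<Rightarrow> nat \<Rightarrow> nat \<Rightarrow> bool" where
  "isP a b c d \<longleftrightarrow> a = c \<and> a < b \<and> b < d"
definition isQ :: "nat \<Rightarrow> nat \<Rightarrow> nat \<Rightarrow> nat \<Rightarrow> bool" where
  "isQ a b c d \<longleftrightarrow> a < b \<and> b = c \<and> c < d"

lemma red4: "reduction [a,b,c,d] =
  [card {y \<in> {a,b,c,d}. y < a}, card {y \<in> {a,b,c,d}. y < b},
   card {y \<in> {a,b,c,d}. y < c}, card {y \<in> {a,b,c,d}. y < d}]"
  by (simp add: reduction_def)

lemma card0_min: "card {y \<in> {a,b,c,d::nat}. y < x} = 0 \<Longrightarrow> y \<in> {a,b,c,d} \<Longrightarrow> x \<le> y"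
  by (cases "y < x") auto

lemma card_le2: "S \<subseteq> {u::nat, v} \<Longrightarrow> card S \<le> 2"
proof -
  assume "S \<subseteq> {u,v}"
  hence "card S \<le> card {u,v}" by (rule card_mono[rotated]) simp
  also have "\<dots> \<le> 2" by (cases "u=v") auto
  finally show ?thesis .
qed

lemma card_le1: "S \<subseteq> {u::nat} \<Longrightarrow> card S \<le> 1"
proof -
  assume "S \<subseteq> {u}"
  hence "card S \<le> card {u}" by (rule card_mono[rotated]) simp
  thus ?thesis by simp
qed

lemma red_p: "reduction [a,b,c,d] = pat_p \<longleftrightarrow> isP a b c d"
proof
  assume "reduction [a,b,c,d] = pat_p"
  hence h: "card {y \<in> {a,b,c,d}. y < a} = 0" "card {y \<in> {a,b,c,d}. y < b} = 1"
    "card {y \<in> {a,b,c,d}. y < c} = 0" "card {y \<in> {a,b,c,d}. y < d} = 2"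
    unfolding red4 pat_p_def by simp_all
  have "a \<le> c" "c \<le> a" "a \<le> b" "a \<le> d" using card0_min[OF h(1)] card0_min[OF h(3)] by auto
  hence ac: "a = c" by simp
  have ab: "a < b"
  proof (rule ccontr)
    assume "\<not> a < b"
    hence "{y \<in> {a,b,c,d}. y < b} = {}" using \<open>a \<le> c\<close> \<open>a \<le> d\<close> \<open>a \<le> b\<close> ac by auto
    hence "card {y \<in> {a,b,c,d}. y < b} = 0" by (simp only: card.empty)
    thus False using h(2) by linarith
  qed
  have bd: "b < d"
  proof (rule ccontr)
    assume "\<not> b < d"
    hence "{y \<in> {a,b,c,d}. y < d} \<subseteq> {a}" using ac by auto
    hence "card {y \<in> {a,b,c,d}. y < d} \<le> 1" by (rule card_le1)
    thus False using h(4) by linarith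
  qed
  show "isP a b c d" using ac ab bd by (simp add: isP_def)
next
  assume "isP a b c d"
  hence *: "c = a" "a < b" "b < d" by (auto simp: isP_def)
  have 1: "{y \<in> {a,b,c,d}. y < a} = {}" using * by auto
  have 2: "{y \<in> {a,b,c,d}. y < b} = {a}" using * by auto
  have 3: "{y \<in> {a,b,c,d}. y < d} = {a,b}" using * by auto
  show "reduction [a,b,c,d] = pat_p" unfolding red4 pat_p_def using 1 2 3 * by simp
qed

lemma red_q: "reduction [a,b,c,d] = pat_q \<longleftrightarrow> isQ a b c d"
proof
  assume "reduction [a,b,c,d] = pat_q"
  hence h: "card {y \<in> {a,b,c,d}. y < a} = 0" "card {y \<in> {a,b,c,d}. y < b} = 1"
    "card {y \<in> {a,b,c,d}. y < c} = 1" "card {y \<in> {a,b,c,d}. y < d} = 2"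
    unfolding red4 pat_q_def by simp_all
  have m: "a \<le> b" "a \<le> c" "a \<le> d" using card0_min[OF h(1)] by auto
  have ab: "a < b"
  proof (rule ccontr)
    assume "\<not> a < b"
    hence "{y \<in> {a,b,c,d}. y < b} = {}" using m by auto
    hence "card {y \<in> {a,b,c,d}. y < b} = 0" by (simp only: card.empty)
    thus False using h(2) by linarith
  qed
  have ac: "a < c"
  proof (rule ccontr)
    assume "\<not> a < c"
    hence "{y \<in> {a,b,c,d}. y < c} = {}" using m by auto
    hence "card {y \<in> {a,b,c,d}. y < c} = 0" by (simp only: card.empty)
    thus False using h(3) by linarith
  qed
  have bc: "b = c"
  proof (rule ccontr)
    assume "b \<noteq> c"
    then consider "b < c" | "c < b" by linarith
    thus False
    proof cases
      case 1
      hence "{a,b} \<subseteq> {y \<in> {a,b,c,d}. y < c}" using ac by auto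
      hence "card {a,b} \<le> card {y \<in> {a,b,c,d}. y < c}" by (rule card_mono[rotated]) simp
      thus False using h(3) ab by simp
    next
      case 2
      hence "{a,c} \<subseteq> {y \<in> {a,b,c,d}. y < b}" using ab by auto
      hence "card {a,c} \<le> card {y \<in> {a,b,c,d}. y < b}" by (rule card_mono[rotated]) simp
      thus False using h(2) ac by simp
    qed
  qed
  have cd: "c < d"
  proof (rule ccontr)
    assume "\<not> c < d"
    hence "{y \<in> {a,b,c,d}. y < d} \<subseteq> {a}" using bc by auto
    hence "card {y \<in> {a,b,c,d}. y < d} \<le> 1" by (rule card_le1)
    thus False using h(4) by linarith
  qed
  show "isQ a b c d" using ab bc cd by (simp add: isQ_def)
next
  assume "isQ a b c d"
  hence *: "a < b" "c = b" "b < d" by (auto simp: isQ_def)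
  have 1: "{y \<in> {a,b,c,d}. y < a} = {}" using * by auto
  have 2: "{y \<in> {a,b,c,d}. y < b} = {a}" using * by auto
  have 3: "{y \<in> {a,b,c,d}. y < d} = {a,b}" using * by auto
  show "reduction [a,b,c,d] = pat_q" unfolding red4 pat_q_def using 1 2 3 * by simp
qed

lemma occ_p_iff: "occ pat_p s i \<longleftrightarrow> 1 \<le> i \<and> i + 3 \<le> length s \<and>
   isP (nth1 s i) (nth1 s (i+1)) (nth1 s (i+2)) (nth1 s (i+3))"
  unfolding occ_def red_p by simp

lemma occ_q_iff: "occ pat_q s i \<longleftrightarrow> 1 \<le> i \<and> i + 3 \<le> length s \<and>
   isQ (nth1 s i) (nth1 s (i+1)) (nth1 s (i+2)) (nth1 s (i+3))"
  unfolding occ_def red_q by simp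

definition st :: "nat list \<Rightarrow> nat \<Rightarrow> nat list \<times> nat option" where
  "st E j = fold (algA_step E) [1..<j+1] (E, None)"

lemma st_0: "st E 0 = (E, None)" by (simp add: st_def)
lemma st_Suc: "st E (Suc j) = algA_step E (Suc j) (st E j)" by (simp add: st_def)
lemma algA_st: "algA E = fst (st E (length E))" by (simp add: algA_def st_def)

lemma step_fst_cases:
  "fst (algA_step E k sl) = fst sl \<or> (\<exists>v. fst (algA_step E k sl) = (fst sl)[k-1 := v])"
  by (auto simp: algA_step_def Let_def split: option.split)

lemma len_st: "length (fst (st E j)) = length E"
proof (induction j)
  case 0 then show ?case by (simp add: st_0)
next
  case (Suc j)
  then show ?case using step_fst_cases[of E "Suc j" "st E j"] by (auto simp: st_Suc)
qed

lemma len_algA: "length (algA E) = length E"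
  by (simp add: algA_st len_st)

lemma nth1_st_other: "1 \<le> m \<Longrightarrow> m \<noteq> Suc j \<Longrightarrow>
   nth1 (fst (st E (Suc j))) m = nth1 (fst (st E j)) m"
  using step_fst_cases[of E "Suc j" "st E j"]
  by (auto simp: st_Suc nth1_def)

lemma V_before: "1 \<le> m \<Longrightarrow> j < m \<Longrightarrow> nth1 (fst (st E j)) m = nth1 E m"
proof (induction j)
  case 0 then show ?case by (simp add: st_0)
next
  case (Suc j)
  then show ?case using nth1_st_other[of m j E] by simp
qed

lemma V_after: "1 \<le> m \<Longrightarrow> m \<le> j \<Longrightarrow> nth1 (fst (st E j)) m = nth1 (fst (st E m)) m"
proof (induction j)
  case 0 then show ?case by simp
next
  case (Suc j)
  show ?case
  proof (cases "m = Suc j")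
    case True then show ?thesis by simp
  next
    case False
    then show ?thesis using Suc nth1_st_other[of m j E] by simp
  qed
qed

abbreviation fo :: "nat list \<Rightarrow> nat \<Rightarrow> nat" where
  "fo E \<equiv> nth1 (algA E)"

lemma fo_st: "1 \<le> m \<Longrightarrow> m \<le> length E \<Longrightarrow> fo E m = nth1 (fst (st E m)) m"
  unfolding algA_st by (rule V_after)

lemma fo_prev: "1 \<le> m \<Longrightarrow> m \<le> j \<Longrightarrow> j \<le> length E \<Longrightarrow> nth1 (fst (st E j)) m = fo E m"
  using V_after[of m j E] fo_st[of m E] by simp

definition pE :: "nat list \<Rightarrow> nat \<Rightarrow> bool" where
  "pE E k = occ pat_p E (k-2)"
definition qE :: "nat list \<Rightarrow> nat \<Rightarrow> bool" where
  "qE E k = occ pat_q E (k-2)"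
definition Nw :: "nat list \<Rightarrow> nat \<Rightarrow> bool" where
  "Nw E k = (occ pat_p (fst (st E (k-1))) (k-2) \<or> occ pat_q (fst (st E (k-1))) (k-2))"
definition L :: "nat list \<Rightarrow> nat \<Rightarrow> nat option" where
  "L E j = snd (st E j)"
definition act :: "nat list \<Rightarrow> nat \<Rightarrow> bool" where
  "act E k = (pE E k \<or> qE E k \<or> (Nw E k \<and> L E (k-1) \<noteq> None))"

lemma pE_iff: "pE E k \<longleftrightarrow> 3 \<le> k \<and> k+1 \<le> length E \<and>
   isP (nth1 E (k-2)) (nth1 E (k-1)) (nth1 E k) (nth1 E (k+1))"
proof (cases "3 \<le> k")
  case True
  then have "k - 2 + 1 = k - 1" "k - 2 + 2 = k" "k - 2 + 3 = k + 1" "1 \<le> k - 2" by auto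
  then show ?thesis using True unfolding pE_def occ_p_iff by simp
qed (auto simp: pE_def occ_p_iff)

lemma qE_iff: "qE E k \<longleftrightarrow> 3 \<le> k \<and> k+1 \<le> length E \<and>
   isQ (nth1 E (k-2)) (nth1 E (k-1)) (nth1 E k) (nth1 E (k+1))"
proof (cases "3 \<le> k")
  case True
  then have "k - 2 + 1 = k - 1" "k - 2 + 2 = k" "k - 2 + 3 = k + 1" "1 \<le> k - 2" by auto
  then show ?thesis using True unfolding qE_def occ_q_iff by simp
qed (auto simp: qE_def occ_q_iff)

lemma Nw_iff: "Nw E k \<longleftrightarrow> 3 \<le> k \<and> k+1 \<le> length E \<and>
   (isP (fo E (k-2)) (fo E (k-1)) (nth1 E k) (nth1 E (k+1)) \<or>
    isQ (fo E (k-2)) (fo E (k-1)) (nth1 E k) (nth1 E (k+1)))"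
proof (cases "3 \<le> k \<and> k+1 \<le> length E")
  case True
  then have a: "k - 2 + 1 = k - 1" "k - 2 + 2 = k" "k - 2 + 3 = k + 1" "1 \<le> k - 2" by auto
  have b: "nth1 (fst (st E (k-1))) (k-2) = fo E (k-2)" "nth1 (fst (st E (k-1))) (k-1) = fo E (k-1)"
    using True by (auto intro!: fo_prev)
  have c: "nth1 (fst (st E (k-1))) k = nth1 E k" "nth1 (fst (st E (k-1))) (k+1) = nth1 E (k+1)"
    using True by (auto intro!: V_before)
  show ?thesis using True a b c unfolding Nw_def occ_p_iff occ_q_iff len_st by simp
next
  case False
  then show ?thesis unfolding Nw_def occ_p_iff occ_q_iff len_st by auto
qed

lemma act_bounds: "act E k \<Longrightarrow> 3 \<le> k \<and> k+1 \<le> length E"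
  unfolding act_def using pE_iff qE_iff Nw_iff by blast

lemma pq_excl: "pE E k \<Longrightarrow> \<not> qE E k"
  unfolding pE_iff qE_iff isP_def isQ_def by auto

lemma st_k: "1 \<le> k \<Longrightarrow> st E k = algA_step E k (st E (k-1))"
  using st_Suc[of E "k-1"] by simp

lemma step_eval:
  assumes k: "1 \<le> k" "k \<le> length E"
  shows "fo E k = (if pE E k then nth1 (fst (st E (k-1))) (k-1)
             else if qE E k then nth1 (fst (st E (k-1))) (k-2)
             else if Nw E k then (case L E (k-1) of None \<Rightarrow> nth1 E k | Some v \<Rightarrow> v)
             else nth1 E k)
       \<and> L E k = (if act E k then Some (nth1 E k) else L E (k-1))"
proof -
  define s where "s = fst (st E (k-1))"
  define l where "l = L E (k-1)"
  have stk: "st E k = algA_step E k (s, l)" using st_k[OF k(1), of E] by (simp add: s_def l_def L_def)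
  have ls: "length s = length E" by (simp add: s_def len_st)
  have sk: "nth1 s k = nth1 E k" unfolding s_def using k by (auto intro: V_before)
  have upd: "\<And>v. nth1 (s[k-1 := v]) k = v" using k ls by (simp add: nth1_def)
  have fok: "fo E k = nth1 (fst (st E k)) k" using fo_st k by blast
  have N: "Nw E k = (occ pat_p s (k-2) \<or> occ pat_q s (k-2))" by (simp add: Nw_def s_def)
  show ?thesis
    unfolding fok L_def stk using upd sk
    by (auto simp: algA_step_def Let_def pE_def qE_def Nw_def
        act_def l_def L_def s_def split: option.split)
qed

lemma f_p: "pE E k \<Longrightarrow> fo E k = fo E (k-1)"
proof -
  assume p: "pE E k"
  then have k: "3 \<le> k" "k + 1 \<le> length E" by (auto simp: pE_iff)
  have "fo E k = nth1 (fst (st E (k-1))) (k-1)" using step_eval[of k E] k p by simp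
  also have "\<dots> = fo E (k-1)" using k by (intro fo_prev) auto
  finally show ?thesis .
qed

lemma f_q: "qE E k \<Longrightarrow> fo E k = fo E (k-2)"
proof -
  assume q: "qE E k"
  then have k: "3 \<le> k" "k + 1 \<le> length E" by (auto simp: qE_iff)
  have np: "\<not> pE E k" using q pq_excl by blast
  have "fo E k = nth1 (fst (st E (k-1))) (k-2)" using step_eval[of k E] k q np by simp
  also have "\<dots> = fo E (k-2)" using k by (intro fo_prev) auto
  finally show ?thesis .
qed

lemma f_N: "\<not> pE E k \<Longrightarrow> \<not> qE E k \<Longrightarrow> Nw E k \<Longrightarrow> L E (k-1) = Some v \<Longrightarrow> fo E k = v"
proof -
  assume a: "\<not> pE E k" "\<not> qE E k" "Nw E k" "L E (k-1) = Some v"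
  then have k: "3 \<le> k" "k + 1 \<le> length E" by (auto simp: Nw_iff)
  show ?thesis using step_eval[of k E] k a by simp
qed

lemma f_non: "1 \<le> k \<Longrightarrow> k \<le> length E \<Longrightarrow> \<not> act E k \<Longrightarrow> fo E k = nth1 E k"
  using step_eval[of k E] by (auto simp: act_def split: option.split)

lemma L_act: "act E k \<Longrightarrow> L E k = Some (nth1 E k)"
  using step_eval[of k E] act_bounds[of E k] by auto

lemma L_non: "1 \<le> k \<Longrightarrow> k \<le> length E \<Longrightarrow> \<not> act E k \<Longrightarrow> L E k = L E (k-1)"
  using step_eval[of k E] by auto

lemma S4: "act E k \<Longrightarrow> nth1 E k < nth1 E (k+1)"
  unfolding act_def pE_iff qE_iff Nw_iff isP_def isQ_def by auto

lemma S2_aux: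
  assumes N: "Nw E k" and np: "\<not> pE E k" and nq: "\<not> qE E k"
    and IH: "act E (k-1) \<Longrightarrow> fo E (k-1) < nth1 E k"
  shows "act E (k-2) \<and> \<not> act E (k-1)"
proof -
  have k: "3 \<le> k" "k + 1 \<le> length E" using N by (auto simp: Nw_iff)
  have w: "isP (fo E (k-2)) (fo E (k-1)) (nth1 E k) (nth1 E (k+1)) \<or>
           isQ (fo E (k-2)) (fo E (k-1)) (nth1 E k) (nth1 E (k+1))" using N by (simp add: Nw_iff)
  have n1: "\<not> act E (k-1)"
  proof
    assume "act E (k-1)"
    then have "fo E (k-1) < nth1 E k" by (rule IH)
    then show False using w by (auto simp: isP_def isQ_def)
  qed
  have f1: "fo E (k-1) = nth1 E (k-1)" using k n1 by (intro f_non) auto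
  have a2: "act E (k-2)"
  proof (rule ccontr)
    assume "\<not> act E (k-2)"
    then have "fo E (k-2) = nth1 E (k-2)" using k by (intro f_non) auto
    then show False using w f1 np nq k by (auto simp: pE_iff qE_iff)
  qed
  show ?thesis using n1 a2 by blast
qed

lemma S3: "act E k \<Longrightarrow> fo E k < nth1 E (k+1)"
proof (induction k rule: less_induct)
  case (less k)
  have k: "3 \<le> k" "k + 1 \<le> length E" using act_bounds[OF less.prems] by auto
  have i1: "k - 1 + 1 = k" "k - 2 + 1 = k - 1" "k - 2 - 1 = k - 3" using k by auto
  consider (p) "pE E k" | (q) "qE E k" | (n) "\<not> pE E k" "\<not> qE E k" "Nw E k" "L E (k-1) \<noteq> None"
    using less.prems unfolding act_def by blast
  then show ?case
  proof cases
    case p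
    have e: "nth1 E (k-2) = nth1 E k" "nth1 E k < nth1 E (k-1)" "nth1 E (k-1) < nth1 E (k+1)"
      using p by (auto simp: pE_iff isP_def)
    have "fo E (k-1) < nth1 E (k+1)"
    proof (cases "act E (k-1)")
      case True
      then have "fo E (k-1) < nth1 E (k-1+1)" using less.IH[of "k-1"] k by auto
      then show ?thesis using e i1 by simp
    next
      case False
      then have "fo E (k-1) = nth1 E (k-1)" using k by (intro f_non) auto
      then show ?thesis using e by simp
    qed
    then show ?thesis using f_p[OF p] by simp
  next
    case q
    have e: "nth1 E (k-2) < nth1 E (k-1)" "nth1 E (k-1) = nth1 E k" "nth1 E k < nth1 E (k+1)"
      using q by (auto simp: qE_iff isQ_def)
    have "fo E (k-2) < nth1 E (k+1)"
    proof (cases "act E (k-2)")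
      case True
      then have "fo E (k-2) < nth1 E (k-2+1)" using less.IH[of "k-2"] k by auto
      then show ?thesis using e i1 by simp
    next
      case False
      then have "fo E (k-2) = nth1 E (k-2)" using k by (intro f_non) auto
      then show ?thesis using e by simp
    qed
    then show ?thesis using f_q[OF q] by simp
  next
    case n
    have IH1: "act E (k-1) \<Longrightarrow> fo E (k-1) < nth1 E k"
      using less.IH[of "k-1"] k i1 by auto
    have s2: "act E (k-2) \<and> \<not> act E (k-1)" using S2_aux[OF n(3) n(1) n(2) IH1] .
    have "L E (k-1) = L E (k-1-1)" using s2 k by (intro L_non) auto
    also have "k - 1 - 1 = k - 2" by simp
    also have "L E (k-2) = Some (nth1 E (k-2))" using s2 L_act by blast
    finally have Lk: "L E (k-1) = Some (nth1 E (k-2))" .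
    have fk: "fo E k = nth1 E (k-2)" using f_N[OF n(1) n(2) n(3) Lk] .
    have s4: "nth1 E (k-2) < nth1 E (k-1)" using S4[of E "k-2"] s2 i1 by simp
    have f1: "fo E (k-1) = nth1 E (k-1)" using k s2 by (intro f_non) auto
    have "nth1 E (k-1) < nth1 E (k+1)" using n(3) f1 by (auto simp: Nw_iff isP_def isQ_def)
    then show ?thesis using fk s4 by simp
  qed
qed

lemma S2: "Nw E k \<Longrightarrow> \<not> pE E k \<Longrightarrow> \<not> qE E k \<Longrightarrow> act E (k-2) \<and> \<not> act E (k-1)"
proof -
  assume a: "Nw E k" "\<not> pE E k" "\<not> qE E k"
  then have k: "3 \<le> k" by (auto simp: Nw_iff)
  have "act E (k-1) \<Longrightarrow> fo E (k-1) < nth1 E k" using S3[of E "k-1"] k by simp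
  then show ?thesis using S2_aux[OF a] by blast
qed

lemma S1: "act E k \<Longrightarrow> \<not> act E (k+1)"
proof
  assume a: "act E k" and b: "act E (k+1)"
  have k: "3 \<le> k" "k + 2 \<le> length E" using act_bounds[OF a] act_bounds[OF b] by auto
  have ik: "k + 1 - 2 = k - 1" "k + 1 - 1 = k" using k by auto
  show False
  proof (cases "pE E (k+1) \<or> qE E (k+1)")
    case True
    then have lt: "nth1 E (k-1) < nth1 E k" using ik by (auto simp: pE_iff qE_iff isP_def isQ_def)
    consider (p) "pE E k" | (q) "qE E k" | (n) "\<not> pE E k" "\<not> qE E k" "Nw E k"
      using a unfolding act_def by blast
    then show False
    proof cases
      case p then show False using lt by (auto simp: pE_iff isP_def)
    next
      case q then show False using lt by (auto simp: qE_iff isQ_def)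
    next
      case n
      have s2: "act E (k-2) \<and> \<not> act E (k-1)" using S2[OF n(3) n(1) n(2)] .
      have f1: "fo E (k-1) = nth1 E (k-1)" using k s2 by (intro f_non) auto
      show False using n(3) f1 lt by (auto simp: Nw_iff isP_def isQ_def)
    qed
  next
    case False
    then have "Nw E (k+1)" "\<not> pE E (k+1)" "\<not> qE E (k+1)" using b by (auto simp: act_def)
    then have "\<not> act E (k+1-1)" using S2 by blast
    then show False using a ik by simp
  qed
qed

lemma nth1_algA: "nth1 (algA E) = fo E" by simp

lemma no_act_next:
  assumes "nth1 E k \<le> nth1 E (k-1)" "\<not> act E (k-1)" "3 \<le> k"
  shows "\<not> act E (k+1)"
proof
  assume b: "act E (k+1)"
  have ik: "k + 1 - 2 = k - 1" "k + 1 - 1 = k" using assms by auto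
  show False
  proof (cases "pE E (k+1) \<or> qE E (k+1)")
    case True
    then show False using ik assms(1) by (auto simp: pE_iff qE_iff isP_def isQ_def)
  next
    case False
    then have "Nw E (k+1)" "\<not> pE E (k+1)" "\<not> qE E (k+1)" using b by (auto simp: act_def)
    then have "act E (k+1-2)" using S2 by blast
    then show False using assms ik by simp
  qed
qed

lemma INV: "1 \<le> k \<Longrightarrow> k \<le> length E \<Longrightarrow>
  fo (algA E) k = nth1 E k \<and> (act (algA E) k \<longleftrightarrow> act E k)"
proof (induction k rule: less_induct)
  case (less k)
  define F where "F = algA E"
  have lF: "length F = length E" by (simp add: F_def len_algA)
  have nF: "nth1 F = fo E" by (simp add: F_def)
  have IH: "\<And>m. m < k \<Longrightarrow> 1 \<le> m \<Longrightarrow> fo F m = nth1 E m \<and> (act F m \<longleftrightarrow> act E m)"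
    using less.IH less.prems F_def by auto
  show ?case unfolding F_def[symmetric]
  proof (cases "act E k")
    case True
    have k: "3 \<le> k" "k + 1 \<le> length E" using act_bounds[OF True] by auto
    have i1: "k - 1 + 1 = k" "k - 2 + 1 = k - 1" "k - 1 - 1 = k - 2" using k by auto
    have na1: "\<not> act E (k-1)" using S1[of E "k-1"] True i1 by auto
    have nap: "\<not> act E (k+1)" using S1[of E k] True by auto
    have f1: "fo E (k-1) = nth1 E (k-1)" using k na1 by (intro f_non) auto
    have fp: "fo E (k+1) = nth1 E (k+1)" using k nap by (intro f_non) auto
    have IH1: "fo F (k-1) = nth1 E (k-1)" "act F (k-1) \<longleftrightarrow> act E (k-1)" using IH[of "k-1"] k by auto
    have IH2: "fo F (k-2) = nth1 E (k-2)" "act F (k-2) \<longleftrightarrow> act E (k-2)" using IH[of "k-2"] k by auto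
    consider (p) "pE E k" | (q) "qE E k" | (n) "\<not> pE E k" "\<not> qE E k" "Nw E k" "L E (k-1) \<noteq> None"
      using True unfolding act_def by blast
    then show "fo F k = nth1 E k \<and> act F k = act E k"
    proof cases
      case p
      have e: "nth1 E (k-2) = nth1 E k" "nth1 E k < nth1 E (k-1)" "nth1 E (k-1) < nth1 E (k+1)"
        using p by (auto simp: pE_iff isP_def)
      have f2: "fo E (k-2) < nth1 E (k-1)"
      proof (cases "act E (k-2)")
        case True
        then show ?thesis using S3[of E "k-2"] i1 by simp
      next
        case False
        then have "fo E (k-2) = nth1 E (k-2)" using k by (intro f_non) auto
        then show ?thesis using e by simp
      qed
      have fk: "fo E k = nth1 E (k-1)" using f_p[OF p] f1 by simp
      have qF: "qE F k" unfolding qE_iff lF nF using k f2 fk f1 fp e by (auto simp: isQ_def)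
      have "fo F k = fo F (k-2)" by (rule f_q[OF qF])
      then show ?thesis using IH2 e qF True by (auto simp: act_def)
    next
      case q
      have e: "nth1 E (k-2) < nth1 E (k-1)" "nth1 E (k-1) = nth1 E k" "nth1 E k < nth1 E (k+1)"
        using q by (auto simp: qE_iff isQ_def)
      have f2: "fo E (k-2) < nth1 E (k-1)"
      proof (cases "act E (k-2)")
        case True
        then show ?thesis using S3[of E "k-2"] i1 by simp
      next
        case False
        then have "fo E (k-2) = nth1 E (k-2)" using k by (intro f_non) auto
        then show ?thesis using e by simp
      qed
      have fk: "fo E k = fo E (k-2)" using f_q[OF q] by simp
      have pF: "pE F k" unfolding pE_iff lF nF using k f2 fk f1 fp e by (auto simp: isP_def)
      have "fo F k = fo F (k-1)" by (rule f_p[OF pF])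
      then show ?thesis using IH1 e pF True by (auto simp: act_def)
    next
      case n
      have s2: "act E (k-2) \<and> \<not> act E (k-1)" using S2[OF n(3) n(1) n(2)] .
      have "L E (k-1) = L E (k-1-1)" using s2 k by (intro L_non) auto
      also have "k - 1 - 1 = k - 2" by simp
      also have "L E (k-2) = Some (nth1 E (k-2))" using s2 L_act by blast
      finally have Lk: "L E (k-1) = Some (nth1 E (k-2))" .
      have fk: "fo E k = nth1 E (k-2)" using f_N[OF n(1) n(2) n(3) Lk] .
      have s4: "nth1 E (k-2) < nth1 E (k-1)" using S4[of E "k-2"] s2 i1 by simp
      have w: "fo E (k-2) = nth1 E k" "nth1 E k < nth1 E (k-1)" "nth1 E (k-1) < nth1 E (k+1)"
        using n(3) f1 n(2) s4 k by (auto simp: Nw_iff isP_def isQ_def qE_iff)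
      have ne: "nth1 E (k-2) \<noteq> nth1 E k" using n(1) s4 w k by (auto simp: pE_iff isP_def)
      have npF: "\<not> pE F k" "\<not> qE F k" unfolding pE_iff qE_iff lF nF
        using fk f1 w ne s4 by (auto simp: isP_def isQ_def)
      have NF: "Nw F k" unfolding Nw_iff lF nF using k IH1 IH2 fk fp s4 w by (auto simp: isP_def)
      have "L F (k-1) = L F (k-1-1)" using s2 k IH1 lF by (intro L_non) auto
      also have "k - 1 - 1 = k - 2" by simp
      also have "L F (k-2) = Some (nth1 F (k-2))" using s2 IH2 L_act by blast
      finally have LF: "L F (k-1) = Some (nth1 E k)" using nF w by simp
      have "fo F k = nth1 E k" using f_N[OF npF NF LF] .
      then show ?thesis using True NF LF by (auto simp: act_def)
    qed
  next
    case False
    have fk: "fo E k = nth1 E k" using less.prems False by (intro f_non) auto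
    have naF: "\<not> act F k"
    proof
      assume aF: "act F k"
      have k: "3 \<le> k" "k + 1 \<le> length E" using act_bounds[OF aF] lF by auto
      have i1: "k - 1 + 1 = k" "k - 2 + 1 = k - 1" "k - 1 - 1 = k - 2" using k by auto
      have IH1: "fo F (k-1) = nth1 E (k-1)" "act F (k-1) \<longleftrightarrow> act E (k-1)" using IH[of "k-1"] k by auto
      have IH2: "fo F (k-2) = nth1 E (k-2)" "act F (k-2) \<longleftrightarrow> act E (k-2)" using IH[of "k-2"] k by auto
      have na1: "\<not> act E (k-1)" using S1[of F "k-1"] aF i1 IH1 by auto
      have f1: "fo E (k-1) = nth1 E (k-1)" using k na1 by (intro f_non) auto
      have key: "nth1 E k \<le> nth1 E (k-1) \<Longrightarrow>
          isP (fo E (k-2)) (fo E (k-1)) (nth1 E k) (fo E (k+1)) \<or>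
          isQ (fo E (k-2)) (fo E (k-1)) (nth1 E k) (fo E (k+1)) \<Longrightarrow> False"
      proof -
        assume le: "nth1 E k \<le> nth1 E (k-1)" and w: "isP (fo E (k-2)) (fo E (k-1)) (nth1 E k) (fo E (k+1)) \<or>
          isQ (fo E (k-2)) (fo E (k-1)) (nth1 E k) (fo E (k+1))"
        have "\<not> act E (k+1)" using no_act_next[OF le na1 k(1)] .
        then have fp: "fo E (k+1) = nth1 E (k+1)" using k by (intro f_non) auto
        have NE: "Nw E k" unfolding Nw_iff using k w fp by simp
        show False
        proof (cases "act E (k-2)")
          case True
          have "L E (k-1) = L E (k-1-1)" using na1 k by (intro L_non) auto
          also have "k - 1 - 1 = k - 2" by simp
          also have "L E (k-2) = Some (nth1 E (k-2))" using True L_act by blast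
          finally show False using NE False by (auto simp: act_def)
        next
          case a2: False
          then have "fo E (k-2) = nth1 E (k-2)" using k by (intro f_non) auto
          then have "pE E k \<or> qE E k" using w f1 fp k by (auto simp: pE_iff qE_iff)
          then show False using False by (auto simp: act_def)
        qed
      qed
      show False
      proof (cases "pE F k \<or> qE F k")
        case True
        then have w: "isP (fo E (k-2)) (fo E (k-1)) (nth1 E k) (fo E (k+1)) \<or>
          isQ (fo E (k-2)) (fo E (k-1)) (nth1 E k) (fo E (k+1))"
          unfolding pE_iff qE_iff nF using fk by auto
        then have "nth1 E k \<le> nth1 E (k-1)" using f1 by (auto simp: isP_def isQ_def)
        then show False using key w by blast
      next
        case nb: False
        then have NF: "Nw F k" "\<not> pE F k" "\<not> qE F k" using aF by (auto simp: act_def)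
        have a2: "act E (k-2)" using S2[OF NF] IH2 by blast
        have w: "isP (nth1 E (k-2)) (nth1 E (k-1)) (nth1 E k) (fo E (k+1)) \<or>
          isQ (nth1 E (k-2)) (nth1 E (k-1)) (nth1 E k) (fo E (k+1))"
          using NF(1) IH1 IH2 fk unfolding Nw_iff nF by auto
        then have le: "nth1 E k \<le> nth1 E (k-1)" by (auto simp: isP_def isQ_def)
        have "\<not> act E (k+1)" using no_act_next[OF le na1 k(1)] .
        then have fp: "fo E (k+1) = nth1 E (k+1)" using k by (intro f_non) auto
        have "pE E k \<or> qE E k" using w fp k by (auto simp: pE_iff qE_iff)
        then show False using False by (auto simp: act_def)
      qed
    qed
    have "fo F k = nth1 F k" using less.prems naF lF by (intro f_non) auto
    then show "fo F k = nth1 E k \<and> act F k = act E k" using fk nF naF False by simp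
  qed
qed

theorem corollary3:
  fixes e :: "nat list" and i :: nat
  assumes "inversion_seq e"
    and "transient_occ_p e i"
  shows "transient_occ_p (algA e) i"
proof -
  have t: "1 \<le> i" "i + 3 \<le> length e" "\<not> original_occ_p e i"
    "fo e i = nth1 e (i+2)" "fo e i < nth1 e (i+1)" "nth1 e (i+1) < nth1 e (i+3)"
    using assms(2) unfolding transient_occ_p_def Let_def by auto
  have ne: "nth1 e i \<noteq> nth1 e (i+2)" using t unfolding original_occ_p_def by auto
  have ai: "act e i"
  proof (rule ccontr)
    assume "\<not> act e i"
    then have "fo e i = nth1 e i" using t by (intro f_non) auto
    then show False using ne t by simp
  qed
  have s4: "nth1 e i < nth1 e (i+1)" using S4[OF ai] .
  have na1: "\<not> act e (i+1)" using S1[OF ai] .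
  have "L e (i+1) = L e (i+1-1)" using na1 t by (intro L_non) auto
  also have "\<dots> = Some (nth1 e i)" using L_act[OF ai] by simp
  finally have L1: "L e (i+2-1) = Some (nth1 e i)" by (simp add: numeral_2_eq_2)
  have f1: "fo e (i+1) = nth1 e (i+1)" using na1 t by (intro f_non) auto
  have ix: "i + 2 - 2 = i" "i + 2 - 1 = i + 1" "i + 2 + 1 = i + 3" by auto
  have np: "\<not> pE e (i+2)" "\<not> qE e (i+2)" unfolding pE_iff qE_iff ix using ne t
    by (auto simp: isP_def isQ_def)
  have N: "Nw e (i+2)" unfolding Nw_iff ix using t f1 by (auto simp: isP_def)
  have f2: "fo e (i+2) = nth1 e i" using f_N[OF np N L1] .
  have a2: "act e (i+2)" using N L1 by (auto simp: act_def)
  have na3: "\<not> act e (i+3)" using S1[OF a2] by (simp add: numeral_3_eq_3 numeral_2_eq_2)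
  have f3: "fo e (i+3) = nth1 e (i+3)" using na3 t by (intro f_non) auto
  have g: "fo (algA e) i = nth1 e i" using INV[of i e] t by auto
  show ?thesis unfolding transient_occ_p_def Let_def original_occ_p_def len_algA
    using t g f1 f2 f3 s4 ne by auto
qed


end
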